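(* Let $n$ be a positive integer and let $A(n)=(a_{ij})_{i,j\in\mathbb{N}}$ be the greedy matrix described in the context. For each $i\geq 1$ let $g(i)$ be the smallest $j$ such that $a_{ij}=1$. Then $g$ is monotonically increasing, i.e. $g(i+1)\geq g(i)$ for all $i\ge 1$.
   Context: $\mathbb{N}=\{1,2,3,\dots\}$. Fix a positive integer $n$. The infinite $\{0,1\}$-matrix $A(n)=(a_{ij})_{i,j\in\mathbb{N}}$ is defined recursively. Its entries are determined row by row (row $1$ first), and within each row from left to right, so that $a_{kl}$ is determined after all $a_{ij}$ with $i<k$ and all $a_{kj}$ with $j<l$. One sets $a_{kl}=1$ if and only if all of the following hold: (1) $\sum_{j<l}a_{kj}<n+1$; (2) $\sum_{i<k}a_{il}<n+1$; (3) there is no pair $(i,j)$ with $1\le i<k$, $1\le j<l$ and $a_{ij}=a_{il}=a_{kj}=1$. Otherwise $a_{kl}=0$. *)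

theory Defs
  imports Main
begin

text \<open>Entries are indexed by positive integers i, j >= 1;
  gm n k l is True iff a_kl = 1. Values at index 0 are irrelevant (set to False).
  Condition (1): number of ones among a_kj, 1 <= j < l, is < n+1;
  condition (2): number of ones among a_il, 1 <= i < k, is < n+1;
  condition (3): no i, j with 1 <= i < k, 1 <= j < l and a_ij = a_il = a_kj = 1.\<close>

lemma gm_collect_cong [fundef_cong]:
  "A = B \<Longrightarrow> (\<And>x. x \<in> B \<Longrightarrow> P x = Q x) \<Longrightarrow> {x \<in> A. P x} = {x \<in> B. Q x}"
  by auto

function gm :: "nat \<Rightarrow> nat \<Rightarrow> nat \<Rightarrow> bool" where
  "gm n k l =
    (if k = 0 \<or> l = 0 then False
     else card {j \<in> {1..<l}. gm n k j} < n + 1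
        \<and> card {i \<in> {1..<k}. gm n i l} < n + 1
        \<and> \<not> (\<exists>i \<in> {1..<k}. \<exists>j \<in> {1..<l}. gm n i j \<and> gm n i l \<and> gm n k j))"
  by pat_completeness auto
termination
  by (relation "measures [\<lambda>(n,k,l). k, \<lambda>(n,k,l). l]") auto

end

theory Submission
  imports Defs
begin

declare gm.simps[simp del]

lemma row_card: "card {j \<in> {1..<l}. gm n i j} \<le> n+1"
proof (induction l)
  case 0 then show ?case by simp
next
  case (Suc l)
  show ?case
  proof (cases "l \<ge> 1 \<and> gm n i l")
    case True
    then have "card {j \<in> {1..<l}. gm n i j} < n + 1"
      by (subst (asm) gm.simps) (auto split: if_splits)
    moreover have "{j \<in> {1..<Suc l}. gm n i j} = insert l {j \<in> {1..<l}. gm n i j}"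
      using True by auto
    ultimately show ?thesis by simp
  next
    case False
    then have "{j \<in> {1..<Suc l}. gm n i j} = {j \<in> {1..<l}. gm n i j}"
      by (auto simp: less_Suc_eq)
    then show ?thesis using Suc by simp
  qed
qed

lemma gm0: "gm n i 0 = False" by (subst gm.simps) simp

lemma row_finite: "finite {j. gm n i j}"
proof (rule ccontr)
  assume "infinite {j. gm n i j}"
  then obtain B where B: "B \<subseteq> {j. gm n i j}" "finite B" "card B = n+2"
    using infinite_arbitrarily_large by blast
  have "B \<subseteq> {j \<in> {1..<Max B + 1}. gm n i j}"
  proof
    fix x assume "x \<in> B"
    then have "gm n i x" "x \<le> Max B" using B by auto
    moreover have "x \<noteq> 0" using \<open>gm n i x\<close> gm0 by metis
    ultimately show "x \<in> {j \<in> {1..<Max B + 1}. gm n i j}" by auto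
  qed
  then have "card B \<le> card {j \<in> {1..<Max B + 1}. gm n i j}"
    by (intro card_mono) auto
  with row_card[of "Max B + 1" n i] B(3) show False by simp
qed

lemma row_exists: assumes "k \<ge> 1" shows "\<exists>l. l \<ge> 1 \<and> gm n k l"
proof (rule ccontr)
  assume A: "\<not> ?thesis"
  have "{1::nat..} \<subseteq> (\<Union>i\<in>{1..<k}. {j. gm n i j})"
  proof
    fix l :: nat assume "l \<in> {1..}"
    then have l: "l \<ge> 1" by simp
    have "\<not> gm n k l" using A l by blast
    moreover have "{j. Suc 0 \<le> j \<and> j < l \<and> gm n k j} = {}" using A by auto
    ultimately have "\<not> card {i \<in> {1..<k}. gm n i l} < n + 1"
      using assms l A by (subst (asm) gm.simps) auto
    then have "{i \<in> {1..<k}. gm n i l} \<noteq> {}" by (metis card.empty add_gr_0 less_one)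
    then show "l \<in> (\<Union>i\<in>{1..<k}. {j. gm n i j})" by auto
  qed
  moreover have "finite (\<Union>i\<in>{1..<k}. {j. gm n i j})" using row_finite by auto
  ultimately have "finite {1::nat..}" using finite_subset by blast
  then show False using infinite_Ici[of "1::nat"] by blast
qed

theorem lemma3p2:
  fixes n :: nat
  assumes "n \<ge> 1"
  shows "\<forall>i \<ge> 1. (LEAST j. j \<ge> 1 \<and> gm n (i + 1) j) \<ge> (LEAST j. j \<ge> 1 \<and> gm n i j)"
proof (intro allI impI)
  fix i :: nat assume i: "i \<ge> 1"
  define h where "h = (LEAST j. j \<ge> 1 \<and> gm n (i + 1) j)"
  define g where "g = (LEAST j. j \<ge> 1 \<and> gm n i j)"
  have hP: "h \<ge> 1 \<and> gm n (i + 1) h"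
    unfolding h_def by (rule LeastI_ex) (rule row_exists, simp)
  show "h \<ge> g"
  proof (rule ccontr)
    assume "\<not> h \<ge> g"
    then have hg: "h < g" by simp
    have lt: "\<And>j. j < g \<Longrightarrow> \<not> (j \<ge> 1 \<and> gm n i j)"
      unfolding g_def by (rule not_less_Least)
    have "\<not> gm n i h" using lt[OF hg] hP by blast
    moreover have "{j. Suc 0 \<le> j \<and> j < h \<and> gm n i j} = {}" using lt hg by auto
    moreover have "\<not> (\<exists>i' \<in> {1..<i}. \<exists>j \<in> {1..<h}. gm n i' j \<and> gm n i' h \<and> gm n i j)"
      using lt hg by auto
    ultimately have c1: "\<not> card {i' \<in> {1..<i}. gm n i' h} < n + 1"
      using i hP by (subst (asm) gm.simps) auto
    have c2: "card {i' \<in> {1..<i+1}. gm n i' h} < n + 1"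
      using hP by (subst (asm) gm.simps) (auto split: if_splits)
    have "card {i' \<in> {1..<i}. gm n i' h} \<le> card {i' \<in> {1..<i+1}. gm n i' h}"
      by (intro card_mono) auto
    with c1 c2 show False by simp
  qed
qed

end
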